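(* Let $\mathcal{U},\mathcal{Y}$ be Hilbert spaces, $\mathcal{F}$ a closed subspace of $\mathcal{U}$, and $\omega=\begin{pmatrix}\omega_1\\ \omega_2\end{pmatrix}:\mathcal{F}\to\mathcal{Y}\oplus\mathcal{U}$ a contraction. If either $\omega_1$ is a strict contraction (i.e. $\|\omega_1\|<1$) or $\dim(\mathcal{U})<\infty$, then the condition "$\omega_1(\Pi_{\mathcal{F}}\omega_2)^n:\mathcal{F}\to\mathcal{Y}$ is a co-isometry for every $n=0,1,2,\ldots$" is equivalent to $\mathcal{Y}=\{0\}$.
   Context: $\Pi_{\mathcal{F}}:\mathcal{U}\to\mathcal{F}$ is the orthogonal projection. *)

theory Defs
  imports "HOL-Analysis.Analysis"
begin

text \<open>Operators with domain F are total functions whose values off F are irrelevant.\<close>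

definition linear_on_set :: "'a::real_vector set \<Rightarrow> ('a \<Rightarrow> 'b::real_vector) \<Rightarrow> bool" where
  "linear_on_set F T \<longleftrightarrow>
     (\<forall>x\<in>F. \<forall>y\<in>F. T (x + y) = T x + T y) \<and> (\<forall>c. \<forall>x\<in>F. T (c *\<^sub>R x) = c *\<^sub>R T x)"

definition orth_proj :: "'a::real_inner set \<Rightarrow> 'a \<Rightarrow> 'a" where
  "orth_proj F x = (THE p. p \<in> F \<and> (\<forall>y\<in>F. inner (x - p) y = 0))"

text \<open>T : F \<rightarrow> Y is a co-isometry: its Hilbert adjoint T* : Y \<rightarrow> F satisfies T T* = I.\<close>
definition coisometry_on :: "'a::real_inner set \<Rightarrow> ('a \<Rightarrow> 'b::real_inner) \<Rightarrow> bool" where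
  "coisometry_on F T \<longleftrightarrow>
     (\<exists>S. (\<forall>y. S y \<in> F) \<and> (\<forall>x\<in>F. \<forall>y. inner (T x) y = inner x (S y)) \<and> (\<forall>y. T (S y) = y))"

end

theory Submission
  imports Defs
begin

lemma proj_exists:
  fixes F :: "'u::real_inner set" and B :: "'u set"
  assumes sub: "subspace F" and fin: "finite B" and spB: "span B = UNIV"
  shows "\<exists>p\<in>F. \<forall>v\<in>F. inner (u - p) v = 0"
proof -
  obtain Bf where Bf: "Bf \<subseteq> F" "independent Bf" "F \<subseteq> span Bf"
    using basis_exists[of F] by metis
  have "finite Bf" using independent_span_bound[OF fin Bf(2)] spB by auto
  then obtain C where C: "finite C" "span C = span Bf" "pairwise orthogonal C"
    using basis_orthogonal by blast
  have spanF: "span C = F"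
    using C(2) Bf sub by (metis span_eq_iff span_minimal subset_antisym)
  define p where "p = (\<Sum>c\<in>C. (inner u c / inner c c) *\<^sub>R c)"
  have pF: "p \<in> F" unfolding p_def spanF[symmetric]
    by (intro span_sum span_scale span_base)
  have orthC: "inner (u - p) c' = 0" if "c' \<in> C" for c'
  proof -
    have "inner p c' = (\<Sum>c\<in>C. (inner u c / inner c c) * inner c c')"
      unfolding p_def by (simp add: inner_sum_left)
    also have "\<dots> = (inner u c' / inner c' c') * inner c' c'
        + (\<Sum>c\<in>C-{c'}. (inner u c / inner c c) * inner c c')"
      using C(1) that by (simp add: sum.remove)
    also have "(\<Sum>c\<in>C-{c'}. (inner u c / inner c c) * inner c c') = 0"
      using C(3) that by (intro sum.neutral) (auto simp: pairwise_def orthogonal_def)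
    also have "(inner u c' / inner c' c') * inner c' c' = inner u c'"
      by (cases "c' = 0") auto
    finally show ?thesis by (simp add: inner_diff_left)
  qed
  have "\<forall>v\<in>F. inner (u - p) v = 0"
  proof
    fix v assume "v \<in> F"
    hence "v \<in> span C" using spanF by simp
    hence "orthogonal (u - p) v"
      by (rule orthogonal_to_span) (use orthC in \<open>auto simp: orthogonal_def\<close>)
    thus "inner (u - p) v = 0" by (simp add: orthogonal_def)
  qed
  with pF show ?thesis by blast
qed

lemma orth_proj_props:
  fixes F :: "'u::real_inner set"
  assumes sub: "subspace F" and ex: "\<exists>p\<in>F. \<forall>v\<in>F. inner (u - p) v = 0"
  shows "orth_proj F u \<in> F" "norm (orth_proj F u) \<le> norm u"
proof -
  have uniq: "\<exists>!p. p \<in> F \<and> (\<forall>y\<in>F. inner (u - p) y = 0)"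
  proof (rule ex_ex1I)
    show "\<exists>p. p \<in> F \<and> (\<forall>y\<in>F. inner (u - p) y = 0)" using ex by blast
  next
    fix p q assume p: "p \<in> F \<and> (\<forall>y\<in>F. inner (u - p) y = 0)"
      and q: "q \<in> F \<and> (\<forall>y\<in>F. inner (u - q) y = 0)"
    have d: "p - q \<in> F" using p q sub by (simp add: subspace_diff)
    have "inner (u - q) (p - q) - inner (u - p) (p - q) = 0" using p q d by simp
    hence "inner (p - q) (p - q) = 0" by (simp add: inner_diff_left inner_diff_right inner_commute)
    thus "p = q" by simp
  qed
  define p where "p = orth_proj F u"
  have P: "p \<in> F \<and> (\<forall>y\<in>F. inner (u - p) y = 0)"
    unfolding p_def orth_proj_def by (rule theI'[OF uniq])
  thus "orth_proj F u \<in> F" by (simp add: p_def)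
  have "inner (u - p) p = 0" using P by simp
  hence "norm p ^ 2 = inner u p" by (simp add: inner_diff_left power2_norm_eq_inner)
  also have "\<dots> \<le> norm u * norm p" by (rule norm_cauchy_schwarz)
  finally have "norm p * norm p \<le> norm u * norm p" by (simp add: power2_eq_square)
  hence "norm p \<le> norm u"
    by (cases "norm p = 0") (auto simp: mult_le_cancel_right)
  thus "norm (orth_proj F u) \<le> norm u" by (simp add: p_def)
qed

theorem proposition2p2:
  fixes F :: "'u::{real_inner, complete_space} set"
    and \<omega> :: "'u \<Rightarrow> 'y::{real_inner, complete_space} \<times> 'u"
  assumes "subspace F" and "closed F"
    and "linear_on_set F \<omega>"
    and "\<forall>x\<in>F. norm (\<omega> x) \<le> norm x"
    and "(\<exists>k<1. \<forall>x\<in>F. norm (fst (\<omega> x)) \<le> k * norm x)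
         \<or> (\<exists>B::'u set. finite B \<and> span B = UNIV)"
  shows "(\<forall>n::nat. coisometry_on F
            (\<lambda>x. fst (\<omega> (((\<lambda>z. orth_proj F (snd (\<omega> z))) ^^ n) x))))
         \<longleftrightarrow> (UNIV :: 'y set) = {0}"
proof
  assume "(UNIV :: 'y set) = {0}"
  hence y0: "\<And>y::'y. y = 0" by auto
  have "0 \<in> F" using assms(1) by (simp add: subspace_0)
  show "\<forall>n::nat. coisometry_on F
            (\<lambda>x. fst (\<omega> (((\<lambda>z. orth_proj F (snd (\<omega> z))) ^^ n) x)))"
    unfolding coisometry_on_def
  proof (intro allI exI[of _ "\<lambda>_. 0"] conjI ballI)
    fix n y x
    show "(0::'u) \<in> F" by fact
    show "inner (fst (\<omega> (((\<lambda>z. orth_proj F (snd (\<omega> z))) ^^ n) x))) y = inner x 0"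
      by (subst y0[of y]) simp
    show "fst (\<omega> (((\<lambda>z. orth_proj F (snd (\<omega> z))) ^^ n) 0)) = y"
      by (subst y0[of y], rule y0)
  qed
next
  define A where "A = (\<lambda>z. orth_proj F (snd (\<omega> z)))"
  define T where "T = (\<lambda>n x. fst (\<omega> ((A ^^ n) x)))"
  assume H: "\<forall>n::nat. coisometry_on F
            (\<lambda>x. fst (\<omega> (((\<lambda>z. orth_proj F (snd (\<omega> z))) ^^ n) x)))"
  hence H': "\<And>n. coisometry_on F (T n)" unfolding T_def A_def by blast
  have contr: "norm (fst (\<omega> z)) ^ 2 + norm (snd (\<omega> z)) ^ 2 \<le> norm z ^ 2" if "z \<in> F" for z
  proof -
    have "norm (\<omega> z) \<le> norm z" using assms(4) that by blast
    hence "norm (\<omega> z) ^ 2 \<le> norm z ^ 2" by (simp add: power_mono)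
    moreover have "norm (\<omega> z) ^ 2 = norm (fst (\<omega> z)) ^ 2 + norm (snd (\<omega> z)) ^ 2"
      using norm_Pair[of "fst (\<omega> z)" "snd (\<omega> z)"] by simp
    ultimately show ?thesis by simp
  qed
  show "(UNIV :: 'y set) = {0}"
  proof (rule ccontr)
    assume "(UNIV :: 'y set) \<noteq> {0}"
    then obtain y :: 'y where y: "y \<noteq> 0" by auto
    have "\<exists>x. x \<in> F \<and> T n x = y \<and> norm x = norm y \<and> (\<forall>z\<in>F. inner (T n z) y = inner z x)" for n
    proof -
      obtain S where S: "\<forall>y. S y \<in> F" "\<forall>x\<in>F. \<forall>y. inner (T n x) y = inner x (S y)" "\<forall>y. T n (S y) = y"
        using H'[of n] unfolding coisometry_on_def by blast
      have "inner (T n (S y)) y = inner (S y) (S y)" using S(2) S(1) by blast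
      hence "inner y y = inner (S y) (S y)" using S(3) by simp
      hence "norm (S y) = norm y" by (simp add: norm_eq_sqrt_inner)
      thus ?thesis using S by blast
    qed
    hence "\<forall>n. \<exists>x. x \<in> F \<and> T n x = y \<and> norm x = norm y \<and> (\<forall>z\<in>F. inner (T n z) y = inner z x)" by blast
    from choice[OF this] obtain x where x0: "\<And>n. x n \<in> F \<and> T n (x n) = y \<and> norm (x n) = norm y \<and> (\<forall>z\<in>F. inner (T n z) y = inner z (x n))"
      by blast
    have x: "\<And>n. x n \<in> F" "\<And>n. T n (x n) = y" "\<And>n. norm (x n) = norm y"
      "\<And>n z. z \<in> F \<Longrightarrow> inner (T n z) y = inner z (x n)"
      using x0 by blast+
    from assms(5) show False
    proof
      assume "\<exists>k<1. \<forall>x\<in>F. norm (fst (\<omega> x)) \<le> k * norm x"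
      then obtain k where k: "k < 1" "\<forall>x\<in>F. norm (fst (\<omega> x)) \<le> k * norm x" by blast
      have "norm (fst (\<omega> (x 0))) \<le> k * norm (x 0)" using k(2) x(1)[of 0] by blast
      moreover have "fst (\<omega> (x 0)) = y" using x(2)[of 0] by (simp add: T_def)
      ultimately have "norm y \<le> k * norm y" using x(3)[of 0] by simp
      moreover have "norm y > 0" using y by simp
      moreover have "k * norm y < 1 * norm y" using k(1) \<open>norm y > 0\<close> by (rule mult_strict_right_mono)
      ultimately show False by simp
    next
      assume "\<exists>B::'u set. finite B \<and> span B = UNIV"
      then obtain B :: "'u set" where B: "finite B" "span B = UNIV" by blast
      have pr: "orth_proj F u \<in> F" "norm (orth_proj F u) \<le> norm u" for u
        using orth_proj_props[OF assms(1) proj_exists[OF assms(1) B]] by auto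
      have AF: "A z \<in> F" for z unfolding A_def by (rule pr(1))
      have key: "norm (fst (\<omega> z)) ^ 2 + norm (A z) ^ 2 \<le> norm z ^ 2" if "z \<in> F" for z
      proof -
        have "norm (A z) \<le> norm (snd (\<omega> z))" unfolding A_def by (rule pr(2))
        hence "norm (A z) ^ 2 \<le> norm (snd (\<omega> z)) ^ 2" by (simp add: power_mono)
        thus ?thesis using contr[OF that] by linarith
      qed
      have AnF: "(A ^^ n) z \<in> F" if "z \<in> F" for n z
        using that AF by (cases n) auto
      have Astep: "norm (A z) \<le> norm z" if "z \<in> F" for z
      proof -
        have "norm (A z) ^ 2 \<le> norm z ^ 2" using key[OF that] by (smt (verit) zero_le_power2)
        thus ?thesis by (rule power2_le_imp_le) simp
      qed
      have w1le: "norm (fst (\<omega> z)) \<le> norm z" if "z \<in> F" for z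
      proof -
        have "norm (fst (\<omega> z)) ^ 2 \<le> norm z ^ 2" using key[OF that] by (smt (verit) zero_le_power2)
        thus ?thesis by (rule power2_le_imp_le) simp
      qed
      have mono: "norm ((A ^^ (m + d)) z) \<le> norm ((A ^^ m) z)" if "z \<in> F" for m d z
      proof (induction d)
        case 0 then show ?case by simp
      next
        case (Suc d)
        have "norm ((A ^^ (m + Suc d)) z) = norm (A ((A ^^ (m + d)) z))" by simp
        also have "\<dots> \<le> norm ((A ^^ (m + d)) z)" by (rule Astep[OF AnF[OF that]])
        finally show ?case using Suc by simp
      qed
      have Tzero: "T m (x n) = 0" if "m < n" for m n
      proof -
        let ?z = "(A ^^ m) (x n)"
        have zF: "?z \<in> F" using AnF x(1) by blast
        have k1: "norm (T m (x n)) ^ 2 + norm ((A ^^ Suc m) (x n)) ^ 2 \<le> norm ?z ^ 2"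
          using key[OF zF] by (simp add: T_def)
        have "norm ?z \<le> norm ((A ^^ 0) (x n))" using mono[OF x(1), of 0 m] by simp
        hence k2: "norm ?z ^ 2 \<le> norm y ^ 2" using x(3)[of n] by (simp add: power_mono)
        have "norm y = norm (T n (x n))" using x(2) by simp
        also have "\<dots> \<le> norm ((A ^^ n) (x n))" unfolding T_def by (rule w1le[OF AnF[OF x(1)]])
        also have "\<dots> \<le> norm ((A ^^ Suc m) (x n))"
          using mono[OF x(1), of "Suc m" "n - Suc m"] that by simp
        finally have "norm y ^ 2 \<le> norm ((A ^^ Suc m) (x n)) ^ 2" by (simp add: power_mono)
        with k1 k2 have "norm (T m (x n)) ^ 2 \<le> 0" by linarith
        thus ?thesis by simp
      qed
      have orth: "inner (x n) (x m) = 0" if "m \<noteq> n" for m n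
      proof (cases "m < n")
        case True
        have "inner (x n) (x m) = inner (T m (x n)) y" using x(4)[OF x(1)] by simp
        thus ?thesis using Tzero[OF True] by simp
      next
        case False
        hence "n < m" using that by simp
        have "inner (x m) (x n) = inner (T n (x m)) y" using x(4)[OF x(1)] by simp
        thus ?thesis using Tzero[OF \<open>n < m\<close>] by (simp add: inner_commute)
      qed
      have nz: "x n \<noteq> 0" for n using x(3)[of n] y by auto
      have inj: "inj_on x {..card B}"
      proof (rule inj_onI)
        fix m n assume "x m = x n"
        show "m = n"
        proof (rule ccontr)
          assume "m \<noteq> n"
          hence "inner (x n) (x n) = 0" using orth[of m n] \<open>x m = x n\<close> by simp
          thus False using nz[of n] by simp
        qed
      qed
      let ?X = "x ` {..card B}"
      have "pairwise orthogonal ?X"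
        unfolding pairwise_def orthogonal_def
      proof (intro ballI impI)
        fix a b assume "a \<in> ?X" "b \<in> ?X" "a \<noteq> b"
        then obtain m n where "a = x m" "b = x n" "m \<noteq> n" by blast
        thus "inner a b = 0" using orth[of n m] by simp
      qed
      moreover have "0 \<notin> ?X" using nz by auto
      ultimately have "independent ?X" by (rule pairwise_orthogonal_independent)
      moreover have "?X \<subseteq> span B" using B(2) by (rule ssubst) (rule subset_UNIV)
      ultimately have "finite ?X \<and> card ?X \<le> card B" by (rule independent_span_bound[OF B(1)])
      hence "card ?X \<le> card B" by (rule conjunct2)
      moreover have "card ?X = card {..card B}" by (rule card_image[OF inj])
      moreover have "card {..card B} = Suc (card B)" by (rule card_atMost)
      ultimately show False by simp
    qed
  qed
qed

end
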